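(* Let $\mathcal{M}$ be a saturated model of Presburger arithmetic and $\mathcal{M}_0\preceq\mathcal{M}$ small. Let $\phi(x,a)$, with $x$ a single variable and $a\in\mathcal{M}^k$, define either a single point or a bounded $1$-cell in $\mathcal{M}$, and suppose $\phi(\mathcal{M},a)\cap\mathcal{M}_0=\emptyset$. Then there is $a'\in\mathcal{M}^k$ such that $\mathrm{tp}(a/\mathcal{M}_0)=\mathrm{tp}(a'/\mathcal{M}_0)$ and $\phi(\mathcal{M},a)\cap\phi(\mathcal{M},a')=\emptyset$.
   Context: Presburger arithmetic is $\mathrm{Th}(\mathbb{Z},+,-,<,0,1,\{\equiv_n\}_n)$. A bounded $1$-cell is an infinite set of the form $\{x\in\mathcal{M}:\alpha\le x\le\beta,\ x\equiv_N c\}$ with $\alpha,\beta\in\mathcal{M}$ and $0\le c<N$ integers. *)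

theory Defs
  imports Main
begin

datatype trm = Var nat | Zero | One | Plus trm trm | Minus trm trm

datatype fm = FTrue | FFalse | Eq trm trm | Less trm trm | Cong nat trm trm
  | Not fm | And fm fm | Or fm fm | Imp fm fm | Ex nat fm | All nat fm

record 'a pstruct =
  pplus :: "'a \<Rightarrow> 'a \<Rightarrow> 'a"
  pminus :: "'a \<Rightarrow> 'a \<Rightarrow> 'a"
  pless :: "'a \<Rightarrow> 'a \<Rightarrow> bool"
  pzero :: 'a
  pone :: 'a
  pcong :: "nat \<Rightarrow> 'a \<Rightarrow> 'a \<Rightarrow> bool"

fun tval :: "'a pstruct \<Rightarrow> (nat \<Rightarrow> 'a) \<Rightarrow> trm \<Rightarrow> 'a" where
  "tval M e (Var n) = e n"
| "tval M e Zero = pzero M"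
| "tval M e One = pone M"
| "tval M e (Plus s t) = pplus M (tval M e s) (tval M e t)"
| "tval M e (Minus s t) = pminus M (tval M e s) (tval M e t)"

text \<open>Satisfaction, with quantifiers ranging over the domain D
  (D = UNIV for the model itself; D = a substructure for relativised satisfaction).\<close>
fun sat :: "'a pstruct \<Rightarrow> 'a set \<Rightarrow> (nat \<Rightarrow> 'a) \<Rightarrow> fm \<Rightarrow> bool" where
  "sat M D e FTrue = True"
| "sat M D e FFalse = False"
| "sat M D e (Eq s t) = (tval M e s = tval M e t)"
| "sat M D e (Less s t) = pless M (tval M e s) (tval M e t)"
| "sat M D e (Cong n s t) = pcong M n (tval M e s) (tval M e t)"
| "sat M D e (Not p) = (\<not> sat M D e p)"
| "sat M D e (And p q) = (sat M D e p \<and> sat M D e q)"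
| "sat M D e (Or p q) = (sat M D e p \<or> sat M D e q)"
| "sat M D e (Imp p q) = (sat M D e p \<longrightarrow> sat M D e q)"
| "sat M D e (Ex x p) = (\<exists>b\<in>D. sat M D (e(x := b)) p)"
| "sat M D e (All x p) = (\<forall>b\<in>D. sat M D (e(x := b)) p)"

fun fvt :: "trm \<Rightarrow> nat set" where
  "fvt (Var n) = {n}"
| "fvt Zero = {}"
| "fvt One = {}"
| "fvt (Plus s t) = fvt s \<union> fvt t"
| "fvt (Minus s t) = fvt s \<union> fvt t"

fun fv :: "fm \<Rightarrow> nat set" where
  "fv FTrue = {}"
| "fv FFalse = {}"
| "fv (Eq s t) = fvt s \<union> fvt t"
| "fv (Less s t) = fvt s \<union> fvt t"
| "fv (Cong n s t) = fvt s \<union> fvt t"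
| "fv (Not p) = fv p"
| "fv (And p q) = fv p \<union> fv q"
| "fv (Or p q) = fv p \<union> fv q"
| "fv (Imp p q) = fv p \<union> fv q"
| "fv (Ex x p) = fv p - {x}"
| "fv (All x p) = fv p - {x}"

definition Zstr :: "int pstruct" where
  "Zstr = \<lparr>pplus = (+), pminus = (-), pless = (<), pzero = 0, pone = 1,
           pcong = (\<lambda>n x y. int n dvd (x - y))\<rparr>"

text \<open>M is a model of Presburger arithmetic Th(Z,...): elementarily equivalent to Zstr.\<close>
definition presburger_model :: "'a pstruct \<Rightarrow> bool" where
  "presburger_model M \<longleftrightarrow>
     (\<forall>\<phi>. fv \<phi> = {} \<longrightarrow> (sat M UNIV (\<lambda>_. undefined) \<phi> \<longleftrightarrow> sat Zstr UNIV (\<lambda>_. 0) \<phi>))"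

definition elem_sub :: "'a pstruct \<Rightarrow> 'a set \<Rightarrow> bool" where
  "elem_sub M S \<longleftrightarrow> S \<noteq> {} \<and> pzero M \<in> S \<and> pone M \<in> S \<and>
     (\<forall>x\<in>S. \<forall>y\<in>S. pplus M x y \<in> S \<and> pminus M x y \<in> S) \<and>
     (\<forall>\<phi> e. range e \<subseteq> S \<longrightarrow> (sat M S e \<phi> \<longleftrightarrow> sat M UNIV e \<phi>))"

definition small_in :: "'a set \<Rightarrow> bool" where
  "small_in A \<longleftrightarrow> (card_of A, card_of (UNIV :: 'a set)) \<in> ordLess"

text \<open>A partial type is a set of pairs (formula, assignment of the parameters).\<close>
definition saturated :: "'a pstruct \<Rightarrow> bool" where
  "saturated M \<longleftrightarrow>
    (\<forall>(A :: 'a set) (\<Sigma> :: (fm \<times> (nat \<Rightarrow> 'a)) set).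
       small_in A \<and>
       (\<forall>(\<phi>, e) \<in> \<Sigma>. \<forall>n \<in> fv \<phi> - {0}. e n \<in> A) \<and>
       (\<forall>F \<subseteq> \<Sigma>. finite F \<longrightarrow> (\<exists>b. \<forall>(\<phi>, e) \<in> F. sat M UNIV (e(0 := b)) \<phi>))
       \<longrightarrow> (\<exists>b. \<forall>(\<phi>, e) \<in> \<Sigma>. sat M UNIV (e(0 := b)) \<phi>))"

text \<open>tp(a/S) = tp(a'/S) for the k-tuples a = (a 1, ..., a k), a' = (a' 1, ..., a' k).\<close>
definition same_type :: "'a pstruct \<Rightarrow> 'a set \<Rightarrow> nat \<Rightarrow> (nat \<Rightarrow> 'a) \<Rightarrow> (nat \<Rightarrow> 'a) \<Rightarrow> bool" where
  "same_type M S k a a' \<longleftrightarrow>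
    (\<forall>\<psi> e. (\<forall>n \<in> fv \<psi> - {1..k}. e n \<in> S) \<longrightarrow>
       (sat M UNIV (override_on e a {1..k}) \<psi> \<longleftrightarrow> sat M UNIV (override_on e a' {1..k}) \<psi>))"

text \<open>The set phi(M,a) defined with x = Var 0 and parameters a 1, ..., a k.\<close>
definition defset :: "'a pstruct \<Rightarrow> fm \<Rightarrow> (nat \<Rightarrow> 'a) \<Rightarrow> 'a set" where
  "defset M \<phi> a = {b. sat M UNIV (a(0 := b)) \<phi>}"

definition num_elem :: "'a pstruct \<Rightarrow> nat \<Rightarrow> 'a" where
  "num_elem M c = (pplus M (pone M) ^^ c) (pzero M)"

definition ple :: "'a pstruct \<Rightarrow> 'a \<Rightarrow> 'a \<Rightarrow> bool" where
  "ple M x y \<longleftrightarrow> pless M x y \<or> x = y"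

definition bounded_1cell :: "'a pstruct \<Rightarrow> 'a set \<Rightarrow> bool" where
  "bounded_1cell M X \<longleftrightarrow> infinite X \<and>
     (\<exists>\<alpha> \<beta> (N::nat) (c::nat). c < N \<and>
        X = {x. ple M \<alpha> x \<and> ple M x \<beta> \<and> pcong M N x (num_elem M c)})"

end

theory Submission
  imports Defs
begin

fun rent :: "(nat \<Rightarrow> nat) \<Rightarrow> trm \<Rightarrow> trm" where
  "rent s (Var n) = Var (s n)"
| "rent s Zero = Zero"
| "rent s One = One"
| "rent s (Plus a b) = Plus (rent s a) (rent s b)"
| "rent s (Minus a b) = Minus (rent s a) (rent s b)"

fun ren :: "(nat \<Rightarrow> nat) \<Rightarrow> fm \<Rightarrow> fm" where
  "ren s FTrue = FTrue"
| "ren s FFalse = FFalse"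
| "ren s (Eq a b) = Eq (rent s a) (rent s b)"
| "ren s (Less a b) = Less (rent s a) (rent s b)"
| "ren s (Cong n a b) = Cong n (rent s a) (rent s b)"
| "ren s (Not p) = Not (ren s p)"
| "ren s (And p q) = And (ren s p) (ren s q)"
| "ren s (Or p q) = Or (ren s p) (ren s q)"
| "ren s (Imp p q) = Imp (ren s p) (ren s q)"
| "ren s (Ex x p) = Ex (s x) (ren s p)"
| "ren s (All x p) = All (s x) (ren s p)"

lemma tval_rent: "tval M e (rent s t) = tval M (e \<circ> s) t"
  by (induction t) auto

lemma upd_comp_inj: "inj s \<Longrightarrow> (e(s x := b)) \<circ> s = (e \<circ> s)(x := b)"
  by (auto simp: fun_eq_iff inj_eq)

lemma sat_ren: "inj s \<Longrightarrow> sat M D e (ren s p) = sat M D (e \<circ> s) p"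
  by (induction p arbitrary: e) (auto simp: tval_rent upd_comp_inj)

lemma fvt_rent: "fvt (rent s t) = s ` fvt t"
  by (induction t) auto

lemma fv_ren: "inj s \<Longrightarrow> fv (ren s p) = s ` fv p"
  by (induction p) (auto simp: fvt_rent image_Un image_set_diff)

lemma tval_cong: "(\<forall>n\<in>fvt t. e n = e' n) \<Longrightarrow> tval M e t = tval M e' t"
  by (induction t) auto

lemma sat_cong: "(\<forall>n\<in>fv p. e n = e' n) \<Longrightarrow> sat M D e p = sat M D e' p"
proof (induction p arbitrary: e e')
  case (Eq s t) then show ?case using tval_cong[of s e e' M] tval_cong[of t e e' M] by auto
next
  case (Less s t) then show ?case using tval_cong[of s e e' M] tval_cong[of t e e' M] by auto
next
  case (Cong n s t) then show ?case using tval_cong[of s e e' M] tval_cong[of t e e' M] by auto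
next
  case (Not p) then show ?case by (metis fv.simps(6) sat.simps(6))
next
  case (And p q)
  have "sat M D e p = sat M D e' p" "sat M D e q = sat M D e' q"
    by (rule And.IH; use And.prems in auto)+
  then show ?case by simp
next
  case (Or p q)
  have "sat M D e p = sat M D e' p" "sat M D e q = sat M D e' q"
    by (rule Or.IH; use Or.prems in auto)+
  then show ?case by simp
next
  case (Imp p q)
  have "sat M D e p = sat M D e' p" "sat M D e q = sat M D e' q"
    by (rule Imp.IH; use Imp.prems in auto)+
  then show ?case by simp
next
  case (Ex x p)
  have "\<And>b. sat M D (e(x:=b)) p = sat M D (e'(x:=b)) p"
    by (rule Ex.IH) (use Ex.prems in auto)
  then show ?case by simp
next
  case (All x p)
  have "\<And>b. sat M D (e(x:=b)) p = sat M D (e'(x:=b)) p"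
    by (rule All.IH) (use All.prems in auto)
  then show ?case by simp
qed auto

lemma finite_fvt: "finite (fvt t)" by (induction t) auto
lemma finite_fv: "finite (fv p)" by (induction p) (auto simp: finite_fvt)

fun exb :: "nat list \<Rightarrow> fm \<Rightarrow> fm" where
  "exb [] p = p" | "exb (x # xs) p = Ex x (exb xs p)"
fun allb :: "nat list \<Rightarrow> fm \<Rightarrow> fm" where
  "allb [] p = p" | "allb (x # xs) p = All x (allb xs p)"

lemma fv_exb: "fv (exb xs p) = fv p - set xs" by (induction xs) auto
lemma fv_allb: "fv (allb xs p) = fv p - set xs" by (induction xs) auto

lemma ov_upd1: "override_on e b (insert x X) = override_on (e(x := b x)) b X"
  by (auto simp: override_on_def fun_eq_iff)
lemma ov_upd2: "override_on (e(x:=c)) b X = override_on e (b(x := if x \<in> X then b x else c)) (insert x X)"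
  by (auto simp: override_on_def fun_eq_iff)

lemma sat_exb: "sat M UNIV e (exb xs p) = (\<exists>b. sat M UNIV (override_on e b (set xs)) p)"
proof (induction xs arbitrary: e)
  case Nil then show ?case by simp
next
  case (Cons x xs)
  show ?case
  proof
    assume "sat M UNIV e (exb (x # xs) p)"
    then obtain c b where "sat M UNIV (override_on (e(x:=c)) b (set xs)) p"
      by (simp only: exb.simps sat.simps Cons.IH) blast
    then show "\<exists>b. sat M UNIV (override_on e b (set (x # xs))) p"
      by (metis ov_upd2 list.simps(15))
  next
    assume "\<exists>b. sat M UNIV (override_on e b (set (x # xs))) p"
    then obtain b where "sat M UNIV (override_on e b (set (x # xs))) p" by blast
    then have "sat M UNIV (override_on (e(x := b x)) b (set xs)) p"
      by (simp only: ov_upd1 list.simps(15))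
    then show "sat M UNIV e (exb (x # xs) p)"
      by (simp only: exb.simps sat.simps Cons.IH) blast
  qed
qed

lemma sat_allb: "sat M UNIV e (allb xs p) = (\<forall>b. sat M UNIV (override_on e b (set xs)) p)"
proof (induction xs arbitrary: e)
  case Nil then show ?case by simp
next
  case (Cons x xs)
  show ?case
  proof
    assume H: "sat M UNIV e (allb (x # xs) p)"
    show "\<forall>b. sat M UNIV (override_on e b (set (x # xs))) p"
      using H by (simp only: allb.simps sat.simps Cons.IH ov_upd1 list.simps(15)) blast
  next
    assume H: "\<forall>b. sat M UNIV (override_on e b (set (x # xs))) p"
    show "sat M UNIV e (allb (x # xs) p)"
    proof (simp only: allb.simps sat.simps Cons.IH, intro ballI allI)
      fix c :: 'a and b show "sat M UNIV (override_on (e(x:=c)) b (set xs)) p"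
        using H by (metis ov_upd2 list.simps(15))
    qed
  qed
qed

definition tau :: "nat \<Rightarrow> nat \<Rightarrow> nat \<Rightarrow> nat" where
  "tau K i n = (if n \<in> {1..K} then n else K + 1 + 2*n + i)"

lemma inj_tau: "inj (tau K i)"
  unfolding inj_def tau_def by auto

lemma tau_nz: "tau K i n \<noteq> 0"
  unfolding tau_def by auto

definition mergeE :: "nat \<Rightarrow> (nat \<Rightarrow> 'a) \<Rightarrow> (nat \<Rightarrow> 'a) \<Rightarrow> nat \<Rightarrow> 'a" where
  "mergeE K e E n = (if K < n then (if even (n - K - 1) then e ((n-K-1) div 2) else E ((n-K-1) div 2)) else e n)"

lemma mergeE0: "n \<notin> {1..K} \<Longrightarrow> mergeE K e E (tau K 0 n) = e n"
  unfolding tau_def mergeE_def by auto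

lemma mergeE1: "n \<notin> {1..K} \<Longrightarrow> mergeE K e E (tau K 1 n) = E n"
proof -
  assume "n \<notin> {1..K}"
  then have t: "tau K 1 n = K + 1 + 2*n + 1" unfolding tau_def by auto
  have "K + 1 + 2*n + 1 - K - 1 = 2*n+1" by simp
  then show ?thesis unfolding t mergeE_def by simp
qed

lemma comp0: "override_on (mergeE K e E) b {1..K} \<circ> tau K 0 = override_on e b {1..K}"
proof
  fix n show "(override_on (mergeE K e E) b {1..K} \<circ> tau K 0) n = override_on e b {1..K} n"
  proof (cases "n \<in> {1..K}")
    case True then show ?thesis by (simp add: tau_def override_on_def)
  next
    case False
    then have "tau K 0 n \<notin> {1..K}" by (simp add: tau_def)
    then show ?thesis
      by (simp only: comp_apply override_on_apply_notin[OF \<open>tau K 0 n \<notin> {1..K}\<close>]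
          override_on_apply_notin[OF False] mergeE0[OF False])
  qed
qed

lemma comp1: "override_on (mergeE K e E) b {1..K} \<circ> tau K 1 = override_on E b {1..K}"
proof
  fix n show "(override_on (mergeE K e E) b {1..K} \<circ> tau K 1) n = override_on E b {1..K} n"
  proof (cases "n \<in> {1..K}")
    case True then show ?thesis by (simp add: tau_def override_on_def)
  next
    case False
    then have "tau K 1 n \<notin> {1..K}" by (simp add: tau_def)
    then show ?thesis
      by (simp only: comp_apply override_on_apply_notin[OF \<open>tau K 1 n \<notin> {1..K}\<close>]
          override_on_apply_notin[OF False] mergeE1[OF False])
  qed
qed

lemma tau_in: "tau K i n \<in> {1..K} \<Longrightarrow> n \<in> {1..K} \<and> tau K i n = n"
  unfolding tau_def by (auto split: if_splits)

lemma merge: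
  assumes "finite F"
  shows "F \<subseteq> {(\<psi>,e). \<forall>n\<in>fv \<psi> - {1..K}. e n \<in> A} \<Longrightarrow>
    \<exists>\<Psi> E. 0 \<notin> fv \<Psi> \<and> (\<forall>n\<in>fv \<Psi> - {1..K}. E n \<in> A) \<and>
      (\<forall>b. sat M UNIV (override_on E b {1..K}) \<Psi> = (\<forall>(\<psi>,e)\<in>F. sat M UNIV (override_on e b {1..K}) \<psi>))"
  using assms
proof (induction F rule: finite_induct)
  case empty
  show ?case by (rule exI[of _ FTrue], rule exI[of _ "\<lambda>_. undefined"]) simp
next
  case (insert pe F)
  obtain \<psi> e where pe: "pe = (\<psi>, e)" by (cases pe)
  from insert obtain \<Psi> E where H: "0 \<notin> fv \<Psi>" "\<forall>n\<in>fv \<Psi> - {1..K}. E n \<in> A"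
    "\<forall>b. sat M UNIV (override_on E b {1..K}) \<Psi> = (\<forall>(\<psi>,e)\<in>F. sat M UNIV (override_on e b {1..K}) \<psi>)"
    by auto
  have pa: "\<forall>n\<in>fv \<psi> - {1..K}. e n \<in> A" using insert.prems pe by auto
  let ?P = "And (ren (tau K 0) \<psi>) (ren (tau K 1) \<Psi>)"
  let ?E = "mergeE K e E"
  have fvP: "fv ?P = tau K 0 ` fv \<psi> \<union> tau K 1 ` fv \<Psi>" by (simp add: fv_ren inj_tau)
  show ?case
  proof (intro exI conjI allI)
    show "0 \<notin> fv ?P" unfolding fvP using tau_nz by (metis UnE imageE)
    show "\<forall>n\<in>fv ?P - {1..K}. ?E n \<in> A"
    proof
      fix n assume n: "n \<in> fv ?P - {1..K}"
      then consider m where "m \<in> fv \<psi>" "n = tau K 0 m" | m where "m \<in> fv \<Psi>" "n = tau K 1 m"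
        unfolding fvP by auto
      then show "?E n \<in> A"
      proof cases
        case 1
        have "m \<notin> {1..K}" using n 1 by (auto simp: tau_def)
        have "m \<in> fv \<psi>" using 1 by simp
        then have "e m \<in> A" using pa \<open>m \<notin> {1..K}\<close> by blast
        then show ?thesis unfolding 1(2) mergeE0[OF \<open>m \<notin> {1..K}\<close>] .
      next
        case 2
        have "m \<notin> {1..K}" using n 2 by (auto simp: tau_def)
        have "m \<in> fv \<Psi>" using 2 by simp
        then have "E m \<in> A" using H(2) \<open>m \<notin> {1..K}\<close> by blast
        then show ?thesis unfolding 2(2) mergeE1[OF \<open>m \<notin> {1..K}\<close>] .
      qed
    qed
    fix b
    show "sat M UNIV (override_on ?E b {1..K}) ?P = (\<forall>(\<psi>,e)\<in>insert pe F. sat M UNIV (override_on e b {1..K}) \<psi>)"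
      using H(3) by (simp only: sat.simps sat_ren[OF inj_tau] comp0 comp1 pe ball_simps(7) prod.case)
  qed
qed

definition sw :: "nat \<Rightarrow> nat \<Rightarrow> nat \<Rightarrow> nat" where
  "sw i j n = (if n = i then j else if n = j then i else n)"

lemma inj_sw: "inj (sw i j)" unfolding inj_def sw_def by auto
lemma sw_sw[simp]: "sw i j (sw i j n) = n" unfolding sw_def by auto

lemma small_insert:
  assumes "infinite (UNIV :: 'a set)" "small_in (A :: 'a set)"
  shows "small_in (insert c A)"
proof -
  have "(card_of ({c} \<union> A), card_of (UNIV :: 'a set)) \<in> ordLess"
  proof (rule card_of_Un_ordLess_infinite)
    show "(card_of {c}, card_of (UNIV :: 'a set)) \<in> ordLess"
      by (rule finite_ordLess_infinite) (use assms(1) in \<open>auto simp: Field_card_of card_of_well_order_on\<close>)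
  qed (use assms in \<open>auto simp: small_in_def\<close>)
  then show ?thesis by (simp add: small_in_def)
qed

lemma ov_shift: "override_on (e(Suc k := c)) b {1..k} = override_on e (b(Suc k := c)) {1..Suc k}"
  by (auto simp: override_on_def fun_eq_iff)

lemma realize:
  assumes satM: "saturated M" and inf: "infinite (UNIV :: 'a set)"
  shows "small_in (A :: 'a set) \<Longrightarrow> (\<forall>(\<psi>,e)\<in>\<Gamma>. \<forall>n\<in>fv \<psi> - {1..k}. e n \<in> A) \<Longrightarrow>
    (\<forall>F\<subseteq>\<Gamma>. finite F \<longrightarrow> (\<exists>b. \<forall>(\<psi>,e)\<in>F. sat M UNIV (override_on e b {1..k}) \<psi>)) \<Longrightarrow>
    \<exists>b. \<forall>(\<psi>,e)\<in>\<Gamma>. sat M UNIV (override_on e b {1..k}) \<psi>"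
proof (induction k arbitrary: A \<Gamma>)
  case 0
  have "\<forall>(\<psi>,e)\<in>\<Gamma>. sat M UNIV e \<psi>"
  proof
    fix pe assume "pe \<in> \<Gamma>"
    then show "case pe of (\<psi>, e) \<Rightarrow> sat M UNIV e \<psi>"
      using "0.prems"(3)[rule_format, of "{pe}"] by auto
  qed
  then show ?case by simp
next
  case (Suc k)
  define K where "K = Suc k"
  define Good where "Good = (\<lambda>\<Psi> E. (\<forall>n\<in>fv \<Psi> - {1..K}. E n \<in> A) \<and>
      (\<exists>F\<subseteq>\<Gamma>. finite F \<and> (\<forall>b. sat M UNIV (override_on E b {1..K}) \<Psi> = (\<forall>(\<psi>,e)\<in>F. sat M UNIV (override_on e b {1..K}) \<psi>))))"
  define \<Sigma> where "\<Sigma> = {(ren (sw 0 K) (exb [1..<K] \<Psi>), E \<circ> sw 0 K) | \<Psi> E. Good \<Psi> E}"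
  have ovK: "override_on (e(K := c')) b {1..k} = override_on e (b(K := c')) {1..K}" for e b c'
    unfolding K_def by (rule ov_shift)
  have setK: "set [1..<K] = {1..k}" unfolding K_def by auto
  have key: "sat M UNIV ((E \<circ> sw 0 K)(0:=c)) (ren (sw 0 K) (exb [1..<K] \<Psi>)) =
     (\<exists>b. sat M UNIV (override_on (E(K:=c)) b {1..k}) \<Psi>)" for E c \<Psi>
  proof -
    have "(E \<circ> sw 0 K)(0:=c) \<circ> sw 0 K = E(K:=c)"
      by (auto simp: fun_eq_iff sw_def K_def)
    then show ?thesis by (simp only: sat_ren[OF inj_sw] sat_exb setK)
  qed
  have "\<exists>c. \<forall>(\<phi>, e)\<in>\<Sigma>. sat M UNIV (e(0 := c)) \<phi>"
  proof (rule satM[unfolded saturated_def, rule_format], intro conjI)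
    show "small_in A" by fact
    have pm: "(E \<circ> sw 0 K) n \<in> A" if G: "Good \<Psi> E" and n: "n \<in> fv (ren (sw 0 K) (exb [1..<K] \<Psi>))" "n \<noteq> 0" for \<Psi> E n
    proof -
      have "n \<in> sw 0 K ` (fv \<Psi> - {1..k})" using n(1) by (simp only: fv_ren[OF inj_sw] fv_exb setK)
      then obtain m where m: "m \<in> fv \<Psi>" "m \<notin> {1..k}" "n = sw 0 K m"
        by blast
      then have "m \<noteq> K" using n by (auto simp: sw_def)
      then have "m \<notin> {1..K}" using m K_def by auto
      then show ?thesis using G m unfolding Good_def by auto
    qed
    show "\<forall>(\<phi>, e)\<in>\<Sigma>. \<forall>n\<in>fv \<phi> - {0}. e n \<in> A"
      unfolding \<Sigma>_def using pm by blast
    show "\<forall>G\<subseteq>\<Sigma>. finite G \<longrightarrow> (\<exists>c. \<forall>(\<phi>, e)\<in>G. sat M UNIV (e(0 := c)) \<phi>)"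
    proof (intro allI impI)
      fix G assume GS: "G \<subseteq> \<Sigma>" and fG: "finite G"
      define Q where "Q = (\<lambda>g (\<Psi>,E,F). g = (ren (sw 0 K) (exb [1..<K] \<Psi>), E \<circ> sw 0 K) \<and> F \<subseteq> \<Gamma> \<and> finite F \<and>
         (\<forall>b. sat M UNIV (override_on E b {1..K}) \<Psi> = (\<forall>(\<psi>,e)\<in>F. sat M UNIV (override_on e b {1..K}) \<psi>)))"
      have "\<forall>g\<in>G. \<exists>t. Q g t"
      proof
        fix g assume "g \<in> G"
        then have "g \<in> \<Sigma>" using GS by blast
        then obtain \<Psi> E F where "g = (ren (sw 0 K) (exb [1..<K] \<Psi>), E \<circ> sw 0 K)" "F \<subseteq> \<Gamma>" "finite F"
         "\<forall>b. sat M UNIV (override_on E b {1..K}) \<Psi> = (\<forall>(\<psi>,e)\<in>F. sat M UNIV (override_on e b {1..K}) \<psi>)"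
          unfolding \<Sigma>_def Good_def by blast
        then show "\<exists>t. Q g t" by (intro exI[of _ "(\<Psi>,E,F)"]) (simp add: Q_def)
      qed
      then obtain f where f: "\<forall>g\<in>G. Q g (f g)" using bchoice[of G Q] by blast
      define U where "U = \<Union>((\<lambda>g. snd (snd (f g))) ` G)"
      have "U \<subseteq> \<Gamma>" "finite U"
      proof -
        have "\<forall>g\<in>G. snd (snd (f g)) \<subseteq> \<Gamma> \<and> finite (snd (snd (f g)))"
        proof
          fix g assume "g \<in> G"
          then have "Q g (f g)" using f by blast
          then show "snd (snd (f g)) \<subseteq> \<Gamma> \<and> finite (snd (snd (f g)))"
            unfolding Q_def by (cases "f g") auto
        qed
        then show "U \<subseteq> \<Gamma>" "finite U" unfolding U_def using fG by auto
      qed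
      then obtain b where b: "\<forall>(\<psi>,e)\<in>U. sat M UNIV (override_on e b {1..K}) \<psi>"
        using Suc.prems(3) K_def by blast
      show "\<exists>c. \<forall>(\<phi>, e)\<in>G. sat M UNIV (e(0 := c)) \<phi>"
      proof (intro exI ballI)
        fix g assume g: "g \<in> G"
        obtain \<Psi> E F where fg: "f g = (\<Psi>,E,F)" by (cases "f g") auto
        have Qg: "g = (ren (sw 0 K) (exb [1..<K] \<Psi>), E \<circ> sw 0 K)"
         "\<forall>b. sat M UNIV (override_on E b {1..K}) \<Psi> = (\<forall>(\<psi>,e)\<in>F. sat M UNIV (override_on e b {1..K}) \<psi>)"
        proof -
          have "Q g (f g)" using f g by blast
          then have "Q g (\<Psi>,E,F)" by (simp only: fg)
          then show "g = (ren (sw 0 K) (exb [1..<K] \<Psi>), E \<circ> sw 0 K)"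
           "\<forall>b. sat M UNIV (override_on E b {1..K}) \<Psi> = (\<forall>(\<psi>,e)\<in>F. sat M UNIV (override_on e b {1..K}) \<psi>)"
            unfolding Q_def prod.case by blast+
        qed
        have "F \<subseteq> U" unfolding U_def using g fg by force
        then have "\<forall>(\<psi>,e)\<in>F. sat M UNIV (override_on e b {1..K}) \<psi>" using b by blast
        then have "sat M UNIV (override_on E b {1..K}) \<Psi>" using Qg(2) by blast
        then have "sat M UNIV (override_on (E(K := b K)) b {1..k}) \<Psi>"
          using ov_shift[of E k "b K" b] by (simp add: K_def)
        then have "sat M UNIV ((E \<circ> sw 0 K)(0 := b K)) (ren (sw 0 K) (exb [1..<K] \<Psi>))"
          using key by blast
        then show "case g of (\<phi>, e) \<Rightarrow> sat M UNIV (e(0 := b K)) \<phi>"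
          using Qg(1) by simp
      qed
    qed
  qed
  then obtain c where c: "\<forall>(\<phi>, e)\<in>\<Sigma>. sat M UNIV (e(0 := c)) \<phi>" by blast
  define \<Gamma>' where "\<Gamma>' = (\<lambda>(\<psi>, e). (\<psi>, e(K := c))) ` \<Gamma>"
  have "\<exists>b. \<forall>(\<psi>,e)\<in>\<Gamma>'. sat M UNIV (override_on e b {1..k}) \<psi>"
  proof (rule Suc.IH[of "insert c A"])
    show "small_in (insert c A)" using small_insert[OF inf Suc.prems(1)] .
    show "\<forall>(\<psi>, e)\<in>\<Gamma>'. \<forall>n\<in>fv \<psi> - {1..k}. e n \<in> insert c A"
    proof
      fix pe assume "pe \<in> \<Gamma>'"
      then obtain \<psi> e where pe: "(\<psi>,e)\<in>\<Gamma>" "pe = (\<psi>, e(K:=c))" unfolding \<Gamma>'_def by auto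
      have "\<forall>n\<in>fv \<psi> - {1..K}. e n \<in> A" using Suc.prems(2) pe(1) K_def by auto
      then show "case pe of (\<psi>,e) \<Rightarrow> \<forall>n\<in>fv \<psi> - {1..k}. e n \<in> insert c A"
        using pe(2) K_def by auto
    qed
    show "\<forall>F\<subseteq>\<Gamma>'. finite F \<longrightarrow> (\<exists>b. \<forall>(\<psi>, e)\<in>F. sat M UNIV (override_on e b {1..k}) \<psi>)"
    proof (intro allI impI)
      fix F' assume F': "F' \<subseteq> \<Gamma>'" "finite F'"
      then obtain F where F: "F \<subseteq> \<Gamma>" "finite F" "F' = (\<lambda>(\<psi>, e). (\<psi>, e(K := c))) ` F"
        using finite_subset_image[OF F'(2) F'(1)[unfolded \<Gamma>'_def]] by blast
      have "F \<subseteq> {(\<psi>,e). \<forall>n\<in>fv \<psi> - {1..K}. e n \<in> A}"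
      proof
        fix x assume "x \<in> F"
        then have "x \<in> \<Gamma>" using F(1) by blast
        from bspec[OF Suc.prems(2) this] show "x \<in> {(\<psi>,e). \<forall>n\<in>fv \<psi> - {1..K}. e n \<in> A}"
          unfolding K_def by (cases x) simp
      qed
      from merge[OF F(2) this] obtain \<Psi> E where M: "\<forall>n\<in>fv \<Psi> - {1..K}. E n \<in> A"
        "\<forall>b. sat M UNIV (override_on E b {1..K}) \<Psi> = (\<forall>(\<psi>,e)\<in>F. sat M UNIV (override_on e b {1..K}) \<psi>)"
        by blast
      have "Good \<Psi> E" unfolding Good_def using M F by blast
      then have "(ren (sw 0 K) (exb [1..<K] \<Psi>), E \<circ> sw 0 K) \<in> \<Sigma>" unfolding \<Sigma>_def by blast
      then have "sat M UNIV ((E \<circ> sw 0 K)(0:=c)) (ren (sw 0 K) (exb [1..<K] \<Psi>))" using c by blast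
      then obtain b where "sat M UNIV (override_on (E(K:=c)) b {1..k}) \<Psi>" using key by blast
      then have "sat M UNIV (override_on E (b(K:=c)) {1..K}) \<Psi>" by (simp only: ovK)
      then have "\<forall>(\<psi>,e)\<in>F. sat M UNIV (override_on e (b(K:=c)) {1..K}) \<psi>" using M(2) by blast
      then have H: "\<forall>(\<psi>,e)\<in>F. sat M UNIV (override_on e (b(K:=c)) {1..K}) \<psi>" .
      have "\<forall>(\<psi>,e)\<in>F'. sat M UNIV (override_on e b {1..k}) \<psi>"
      proof
        fix x assume "x \<in> F'"
        then obtain \<psi> e where pe: "(\<psi>,e)\<in>F" "x = (\<psi>, e(K:=c))" unfolding F(3) by auto
        have "sat M UNIV (override_on e (b(K:=c)) {1..K}) \<psi>" using H pe(1) by blast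
        then show "case x of (\<psi>,e) \<Rightarrow> sat M UNIV (override_on e b {1..k}) \<psi>"
          by (simp only: pe(2) prod.case ovK)
      qed
      then show "\<exists>b. \<forall>(\<psi>, e)\<in>F'. sat M UNIV (override_on e b {1..k}) \<psi>" by blast
    qed
  qed
  then obtain b where b: "\<forall>(\<psi>,e)\<in>\<Gamma>'. sat M UNIV (override_on e b {1..k}) \<psi>" by blast
  show ?case
  proof (rule exI[of _ "b(K := c)"], intro ballI)
    fix pe assume "pe \<in> \<Gamma>"
    then show "case pe of (\<psi>, e) \<Rightarrow> sat M UNIV (override_on e (b(K := c)) {1..Suc k}) \<psi>"
    proof (cases pe)
      case (Pair \<psi> e)
      have "(\<lambda>(\<psi>,e). (\<psi>, e(K:=c))) pe \<in> \<Gamma>'" unfolding \<Gamma>'_def using \<open>pe \<in> \<Gamma>\<close> by (rule imageI)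
      then have "(\<psi>, e(K:=c)) \<in> \<Gamma>'" using Pair by simp
      then have "sat M UNIV (override_on (e(K:=c)) b {1..k}) \<psi>" using b by blast
      then show ?thesis using Pair unfolding K_def[symmetric] by (simp only: ovK prod.case)
    qed
  qed
qed

definition Le :: "trm \<Rightarrow> trm \<Rightarrow> fm" where "Le s t = Or (Less s t) (Eq s t)"

lemma sat_Le[simp]: "sat M D e (Le s t) = ple M (tval M e s) (tval M e t)"
  by (simp add: Le_def ple_def)
lemma fv_Le[simp]: "fv (Le s t) = fvt s \<union> fvt t" by (simp add: Le_def)

lemma ple_Z[simp]: "ple Zstr x y = (x \<le> y)" by (auto simp: ple_def Zstr_def)

lemma transfer:
  assumes "presburger_model M" "fv \<theta> = {}" "sat Zstr UNIV (\<lambda>_. 0) \<theta>"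
  shows "sat M UNIV (\<lambda>_. undefined) \<theta>"
  using assms(1)[unfolded presburger_model_def, rule_format, OF assms(2)] assms(3) by simp

lemma ple_trans:
  assumes "presburger_model M" "ple M x y" "ple M y z" shows "ple M x z"
proof -
  let ?T = "All 1 (All 2 (All 3 (Imp (And (Le (Var 1) (Var 2)) (Le (Var 2) (Var 3))) (Le (Var 1) (Var 3)))))"
  have "sat M UNIV (\<lambda>_. undefined) ?T" by (rule transfer[OF assms(1)]) (auto simp: insert_Diff_if)
  from this[simplified] show ?thesis using assms(2,3) by blast
qed

lemma ple_antisym:
  assumes "presburger_model M" "ple M x y" "ple M y x" shows "x = y"
proof -
  let ?T = "All 1 (All 2 (Imp (And (Le (Var 1) (Var 2)) (Le (Var 2) (Var 1))) (Eq (Var 1) (Var 2))))"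
  have "sat M UNIV (\<lambda>_. undefined) ?T" by (rule transfer[OF assms(1)]) (auto simp: insert_Diff_if)
  from this[simplified] show ?thesis using assms(2,3) by blast
qed

lemma ple_refl: "ple M x x" by (simp add: ple_def)

lemma num_Suc: "num_elem M (Suc n) = pplus M (pone M) (num_elem M n)"
  by (simp add: num_elem_def)

lemma M_infinite:
  fixes M :: "'a pstruct"
  assumes "presburger_model M" shows "infinite (UNIV :: 'a set)"
proof -
  let ?T1 = "All 1 (Less (Var 1) (Plus One (Var 1)))"
  let ?T2 = "All 1 (Not (Less (Var 1) (Var 1)))"
  let ?T3 = "All 1 (All 2 (All 3 (Imp (And (Less (Var 1) (Var 2)) (Less (Var 2) (Var 3))) (Less (Var 1) (Var 3)))))"
  have "sat M UNIV (\<lambda>_. undefined) ?T1" by (rule transfer[OF assms(1)]) (auto simp: Zstr_def insert_Diff_if)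
  then have t1: "\<And>x. pless M x (pplus M (pone M) x)" by simp
  have "sat M UNIV (\<lambda>_. undefined) ?T2" by (rule transfer[OF assms(1)]) (auto simp: Zstr_def insert_Diff_if)
  then have t2: "\<And>x. \<not> pless M x x" by simp
  have "sat M UNIV (\<lambda>_. undefined) ?T3" by (rule transfer[OF assms(1)]) (auto simp: Zstr_def insert_Diff_if)
  note t3' = this[simplified]
  have t3: "\<And>x y z. pless M x y \<Longrightarrow> pless M y z \<Longrightarrow> pless M x z" using t3' by blast
  have lt: "m < n \<Longrightarrow> pless M (num_elem M m) (num_elem M n)" for m n
  proof (induction n)
    case 0 then show ?case by simp
  next
    case (Suc n)
    show ?case
    proof (cases "m = n")
      case True then show ?thesis using t1 by (simp add: num_Suc)
    next
      case False
      then have "pless M (num_elem M m) (num_elem M n)" using Suc by simp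
      then show ?thesis using t1 t3 by (metis num_Suc)
    qed
  qed
  have "inj (num_elem M)"
  proof (rule injI)
    fix m n assume eq: "num_elem M m = num_elem M n"
    show "m = n"
    proof (rule ccontr)
      assume "m \<noteq> n"
      then have "m < n \<or> n < m" by arith
      then show False using lt[of m n] lt[of n m] eq t2 by auto
    qed
  qed
  then have "\<exists>f::nat \<Rightarrow> 'a. inj f \<and> range f \<subseteq> UNIV" by (intro exI[of _ "num_elem M"]) simp
  then show ?thesis by (subst infinite_iff_countable_subset)
qed

definition lefm :: "bool \<Rightarrow> trm \<Rightarrow> trm \<Rightarrow> fm" where
  "lefm d s t = (if d then Le s t else Le t s)"
definition pled :: "'a pstruct \<Rightarrow> bool \<Rightarrow> 'a \<Rightarrow> 'a \<Rightarrow> bool" where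
  "pled M d x y = (if d then ple M x y else ple M y x)"
lemma sat_lefm[simp]: "sat M D e (lefm d s t) = pled M d (tval M e s) (tval M e t)"
  by (simp add: lefm_def pled_def)
lemma fv_lefm[simp]: "fv (lefm d s t) = fvt s \<union> fvt t" by (auto simp: lefm_def)

definition fresh :: "fm \<Rightarrow> nat" where "fresh p = Suc (Max (insert 0 (fv p)))"
lemma fresh_notin: "fresh p \<notin> fv p"
proof
  assume "fresh p \<in> fv p"
  then have "fresh p \<le> Max (insert 0 (fv p))" using finite_fv by simp
  then show False unfolding fresh_def by simp
qed
lemma fresh_nz: "fresh p \<noteq> 0" by (simp add: fresh_def)

definition minfm :: "bool \<Rightarrow> fm \<Rightarrow> fm" where
  "minfm d \<theta> = And \<theta> (All (fresh \<theta>) (Imp (ren (sw 0 (fresh \<theta>)) \<theta>) (lefm d (Var 0) (Var (fresh \<theta>)))))"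

lemma sat_swfresh:
  "sat M UNIV (e(fresh \<theta> := b) \<circ> sw 0 (fresh \<theta>)) \<theta> = sat M UNIV (e(0 := b)) \<theta>"
  by (rule sat_cong) (use fresh_notin fresh_nz in \<open>auto simp: sw_def\<close>)

lemma sat_minfm:
  "sat M UNIV e (minfm d \<theta>) = (sat M UNIV e \<theta> \<and> (\<forall>z. sat M UNIV (e(0:=z)) \<theta> \<longrightarrow> pled M d (e 0) z))"
  unfolding minfm_def using fresh_nz[of \<theta>]
  by (simp add: sat_ren inj_sw sat_swfresh)

lemma fv_minfm: "fv (minfm d \<theta>) \<subseteq> insert 0 (fv \<theta>)"
  unfolding minfm_def using fresh_nz[of \<theta>]
  by (auto simp: fv_ren inj_sw sw_def)

lemma int_min: "(z::int) \<in> T \<Longrightarrow> \<forall>x\<in>T. l \<le> x \<Longrightarrow> \<exists>m\<in>T. \<forall>x\<in>T. m \<le> x"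
proof -
  assume z: "z \<in> T" and b: "\<forall>x\<in>T. l \<le> x"
  define n0 where "n0 = (LEAST n::nat. l + int n \<in> T)"
  have zz: "l + int (nat (z - l)) \<in> T" using z b by simp
  have n0: "l + int n0 \<in> T" unfolding n0_def by (rule LeastI, rule zz)
  show ?thesis
  proof (intro bexI[OF _ n0] ballI)
    fix x assume x: "x \<in> T"
    then have "l + int (nat (x - l)) \<in> T" using b by simp
    then have "n0 \<le> nat (x - l)" unfolding n0_def by (rule Least_le)
    then show "l + int n0 \<le> x" using b x by auto
  qed
qed

lemma int_ext: "(z::int) \<in> T \<Longrightarrow> \<forall>x\<in>T. (if d then l \<le> x else x \<le> l) \<Longrightarrow>
   \<exists>m\<in>T. \<forall>x\<in>T. (if d then m \<le> x else x \<le> m)"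
proof (cases d)
  case True then show "z \<in> T \<Longrightarrow> \<forall>x\<in>T. (if d then l \<le> x else x \<le> l) \<Longrightarrow> ?thesis"
    using int_min[of z T l] by simp
next
  case False
  assume z: "z \<in> T" and b: "\<forall>x\<in>T. (if d then l \<le> x else x \<le> l)"
  have "\<exists>m\<in>uminus ` T. \<forall>x\<in>uminus ` T. m \<le> x"
    by (rule int_min[of "-z" _ "-l"]) (use z b False in auto)
  then obtain m where "m \<in> uminus ` T" "\<forall>x\<in>uminus ` T. m \<le> x" by blast
  then show ?thesis using False by (intro bexI[of _ "-m"]) force+
qed

lemma ext_principle:
  assumes pm: "presburger_model M"
    and z: "sat M UNIV (e(0:=z)) \<theta>" and l: "\<forall>z. sat M UNIV (e(0:=z)) \<theta> \<longrightarrow> pled M d l z"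
  shows "\<exists>z. sat M UNIV (e(0:=z)) (minfm d \<theta>)"
proof -
  define w where "w = fresh \<theta>"
  define I where "I = Imp (And (Ex 0 \<theta>) (Ex w (All 0 (Imp \<theta> (lefm d (Var w) (Var 0)))))) (Ex 0 (minfm d \<theta>))"
  define vs where "vs = sorted_list_of_set (fv \<theta>)"
  have svs: "set vs = fv \<theta>" unfolding vs_def using finite_fv by simp
  have fvI: "fv I \<subseteq> fv \<theta>" unfolding I_def using fv_minfm[of d \<theta>] by auto
  have fvP: "fv (allb vs I) = {}" using fvI by (simp add: fv_allb svs)
  have w: "w \<notin> fv \<theta>" "w \<noteq> 0" unfolding w_def using fresh_notin fresh_nz by auto
  have semI: "sat N UNIV g I = ((\<exists>z. sat N UNIV (g(0:=z)) \<theta>) \<and> (\<exists>l. \<forall>z. sat N UNIV (g(0:=z)) \<theta> \<longrightarrow> pled N d l z)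
      \<longrightarrow> (\<exists>z. sat N UNIV (g(0:=z)) \<theta> \<and> (\<forall>z'. sat N UNIV (g(0:=z')) \<theta> \<longrightarrow> pled N d z z')))" for N :: "'b pstruct" and g
  proof -
    have "sat N UNIV (g(w:=l, 0:=z)) \<theta> = sat N UNIV (g(0:=z)) \<theta>" for l z
      by (rule sat_cong) (use w in auto)
    then show ?thesis unfolding I_def using w(2) by (simp add: sat_minfm)
  qed
  have "sat Zstr UNIV (\<lambda>_. 0) (allb vs I)"
  proof (unfold sat_allb, intro allI)
    fix b :: "nat \<Rightarrow> int"
    let ?g = "override_on (\<lambda>_. 0::int) b (set vs)"
    show "sat Zstr UNIV ?g I"
    proof (unfold semI, intro impI)
      assume "(\<exists>z. sat Zstr UNIV (?g(0:=z)) \<theta>) \<and> (\<exists>l. \<forall>z. sat Zstr UNIV (?g(0:=z)) \<theta> \<longrightarrow> pled Zstr d l z)"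
      then obtain z l where z: "z \<in> {z. sat Zstr UNIV (?g(0:=z)) \<theta>}"
        and l: "\<forall>x\<in>{z. sat Zstr UNIV (?g(0:=z)) \<theta>}. (if d then l \<le> x else x \<le> l)"
        unfolding pled_def ple_Z by blast
      from int_ext[OF z l] obtain m where "m \<in> {z. sat Zstr UNIV (?g(0:=z)) \<theta>}"
        "\<forall>x\<in>{z. sat Zstr UNIV (?g(0:=z)) \<theta>}. (if d then m \<le> x else x \<le> m)" by blast
      then show "\<exists>z. sat Zstr UNIV (?g(0:=z)) \<theta> \<and> (\<forall>z'. sat Zstr UNIV (?g(0:=z')) \<theta> \<longrightarrow> pled Zstr d z z')"
        unfolding pled_def ple_Z by blast
    qed
  qed
  then have "sat M UNIV (\<lambda>_. undefined) (allb vs I)" by (rule transfer[OF pm fvP])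
  then have "sat M UNIV (override_on (\<lambda>_. undefined) e (set vs)) I" by (simp add: sat_allb)
  then have "sat M UNIV e I" by (rule iffD1[OF sat_cong, rotated]) (use fvI svs in auto)
  then have imp: "(\<exists>z. sat M UNIV (e(0:=z)) \<theta>) \<and> (\<exists>l. \<forall>z. sat M UNIV (e(0:=z)) \<theta> \<longrightarrow> pled M d l z)
      \<longrightarrow> (\<exists>z. sat M UNIV (e(0:=z)) \<theta> \<and> (\<forall>z'. sat M UNIV (e(0:=z')) \<theta> \<longrightarrow> pled M d z z'))"
    by (simp only: semI)
  have pre: "(\<exists>z. sat M UNIV (e(0:=z)) \<theta>) \<and> (\<exists>l. \<forall>z. sat M UNIV (e(0:=z)) \<theta> \<longrightarrow> pled M d l z)"
    using z l by blast
  have "\<exists>z. sat M UNIV (e(0:=z)) \<theta> \<and> (\<forall>z'. sat M UNIV (e(0:=z')) \<theta> \<longrightarrow> pled M d z z')"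
    using mp[OF imp pre] .
  then obtain z0 where z0: "sat M UNIV (e(0:=z0)) \<theta>" "\<forall>z'. sat M UNIV (e(0:=z')) \<theta> \<longrightarrow> pled M d z0 z'"
    by blast
  have "sat M UNIV (e(0:=z0)) (minfm d \<theta>)"
    unfolding sat_minfm using z0 by simp
  then show ?thesis by blast
qed

lemma small_union_finite:
  assumes inf: "infinite (UNIV::'a set)" and sm: "small_in (S::'a set)" and fin: "finite F"
  shows "small_in (S \<union> F)"
  using fin
proof (induction F rule: finite_induct)
  case empty then show ?case using sm by simp
next
  case (insert x F) then show ?case using small_insert[OF inf, of "S \<union> F" x] by simp
qed

fun numt :: "nat \<Rightarrow> trm" where
  "numt 0 = Zero" | "numt (Suc c) = Plus One (numt c)"

lemma tval_numt: "tval M e (numt c) = num_elem M c"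
  by (induction c) (simp_all add: num_elem_def)
lemma fvt_numt: "fvt (numt c) = {}" by (induction c) simp_all

lemma shape:
  fixes M :: "'a pstruct"
  assumes pm: "presburger_model M" and fvphi: "fv \<phi> \<subseteq> {0..k}"
    and h: "(\<exists>p. defset M \<phi> a = {p}) \<or> bounded_1cell M (defset M \<phi> a)"
  shows "\<exists>\<alpha> \<beta> Cf m. fv Cf \<subseteq> {0} \<and>
     defset M \<phi> a = {x. ple M \<alpha> x \<and> ple M x \<beta> \<and> sat M UNIV ((\<lambda>_. undefined)(0:=x)) Cf} \<and>
     m \<in> defset M \<phi> a \<and> (\<forall>x\<in>defset M \<phi> a. ple M x m)"
  using h
proof
  assume "\<exists>p. defset M \<phi> a = {p}"
  then obtain p where p: "defset M \<phi> a = {p}" by blast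
  have "{p} = {x. ple M p x \<and> ple M x p \<and> sat M UNIV ((\<lambda>_. undefined)(0:=x)) FTrue}"
    using ple_antisym[OF pm] ple_refl[of M p] by auto
  then show ?thesis using p ple_refl[of M p] by (intro exI[of _ p] exI[of _ FTrue]) auto
next
  assume "bounded_1cell M (defset M \<phi> a)"
  then obtain \<alpha> \<beta> N c where inf: "infinite (defset M \<phi> a)"
    and X: "defset M \<phi> a = {x. ple M \<alpha> x \<and> ple M x \<beta> \<and> pcong M N x (num_elem M c)}"
    unfolding bounded_1cell_def by blast
  define Cf where "Cf = Cong N (Var 0) (numt c)"
  have fvCf: "fv Cf \<subseteq> {0}" unfolding Cf_def by (simp add: fvt_numt)
  have sCf: "sat M UNIV ((\<lambda>_. undefined)(0:=x)) Cf = pcong M N x (num_elem M c)" for x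
    unfolding Cf_def by (simp add: tval_numt)
  obtain x0 where x0: "x0 \<in> defset M \<phi> a" using inf by (metis finite.emptyI ex_in_conv)
  have "\<exists>z. sat M UNIV (a(0:=z)) (minfm False \<phi>)"
  proof (rule ext_principle[OF pm, of a x0 \<phi> False \<beta>])
    show "sat M UNIV (a(0 := x0)) \<phi>" using x0 unfolding defset_def by simp
    show "\<forall>z. sat M UNIV (a(0 := z)) \<phi> \<longrightarrow> pled M False \<beta> z"
      using X unfolding defset_def pled_def by auto
  qed
  then obtain m where "sat M UNIV (a(0:=m)) (minfm False \<phi>)" by blast
  then have m: "m \<in> defset M \<phi> a" "\<forall>x\<in>defset M \<phi> a. ple M x m"
    unfolding sat_minfm defset_def pled_def by auto
  show ?thesis
    by (rule exI[of _ \<alpha>], rule exI[of _ \<beta>], rule exI[of _ Cf], rule exI[of _ m])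
       (use fvCf X sCf m in auto)
qed

lemma core:
  fixes M :: "'a pstruct"
  assumes pm: "presburger_model M" and es: "elem_sub M S" and fvphi: "fv \<phi> \<subseteq> {0..k}"
    and fvCf: "fv Cf \<subseteq> {0}"
    and Xeq: "defset M \<phi> a = {x. ple M \<alpha> x \<and> ple M x \<beta> \<and> sat M UNIV ((\<lambda>_. undefined)(0:=x)) Cf}"
    and mX: "m \<in> defset M \<phi> a" and mmax: "\<forall>x\<in>defset M \<phi> a. ple M x m"
    and disj: "defset M \<phi> a \<inter> S = {}"
    and \<Psi>0: "0 \<notin> fv \<Psi>" and par: "\<forall>n\<in>fv \<Psi> - {1..k}. E n \<in> S"
    and Pa: "sat M UNIV (override_on E a {1..k}) \<Psi>"
  shows "\<exists>b. sat M UNIV (override_on E b {1..k}) \<Psi> \<and> defset M \<phi> b \<inter> defset M \<phi> a = {}"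
proof (rule ccontr)
  assume "\<not> ?thesis"
  then have H: "\<And>b. sat M UNIV (override_on E b {1..k}) \<Psi> \<Longrightarrow> \<exists>x. x \<in> defset M \<phi> b \<and> x \<in> defset M \<phi> a"
    by blast
  have esat: "\<And>\<phi> e. range e \<subseteq> S \<Longrightarrow> sat M S e \<phi> = sat M UNIV e \<phi>"
    using es unfolding elem_sub_def by simp
  have zS: "pzero M \<in> S" using es unfolding elem_sub_def by simp
  have trans: "\<And>x y z. ple M x y \<Longrightarrow> ple M y z \<Longrightarrow> ple M x z" using ple_trans[OF pm] by blast
  define v where "v = Suc (k + Max (insert 0 (fv \<Psi>)))"
  have v: "k < v" "v \<notin> fv \<Psi>" "v \<noteq> 0"
  proof -
    show "k < v" "v \<noteq> 0" unfolding v_def by auto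
    show "v \<notin> fv \<Psi>"
    proof
      assume "v \<in> fv \<Psi>"
      then have "v \<le> Max (insert 0 (fv \<Psi>))" using finite_fv by simp
      then show False unfolding v_def by simp
    qed
  qed
  define \<theta> where "\<theta> = And Cf (exb [1..<Suc k] (And \<Psi> (All v (Imp (ren (sw 0 v) \<phi>) (Le (Var v) (Var 0))))))"
  have setk: "set [1..<Suc k] = {1..k}" by auto
  have cfs: "sat M UNIV (e(0:=x)) Cf = sat M UNIV ((\<lambda>_. undefined)(0:=x)) Cf" for e x
    by (rule sat_cong) (use fvCf in auto)
  have \<theta>sem: "sat M UNIV (E(0:=z)) \<theta> \<longleftrightarrow> sat M UNIV ((\<lambda>_. undefined)(0:=z)) Cf \<and>
     (\<exists>b. sat M UNIV (override_on E b {1..k}) \<Psi> \<and> (\<forall>w\<in>defset M \<phi> b. ple M w z))" for z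
  proof -
    have s1: "sat M UNIV (override_on (E(0:=z)) b {1..k}) \<Psi> = sat M UNIV (override_on E b {1..k}) \<Psi>" for b
      by (rule sat_cong) (use \<Psi>0 in \<open>auto simp: override_on_def\<close>)
    have s2: "sat M UNIV ((override_on (E(0:=z)) b {1..k})(v:=w) \<circ> sw 0 v) \<phi> = sat M UNIV (b(0:=w)) \<phi>" for b w
      by (rule sat_cong) (use fvphi v in \<open>auto simp: override_on_def sw_def\<close>)
    have s3: "((override_on (E(0:=z)) b {1..k})(v:=w)) 0 = z" for b w using v by (simp add: override_on_def)
    have s4: "((override_on (E(0:=z)) b {1..k})(v:=w)) v = w" for b w by simp
    have "sat M UNIV (E(0:=z)) \<theta> \<longleftrightarrow> sat M UNIV (E(0:=z)) Cf \<and>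
      (\<exists>b. sat M UNIV (override_on (E(0:=z)) b {1..k}) \<Psi> \<and>
        (\<forall>w. sat M UNIV ((override_on (E(0:=z)) b {1..k})(v:=w) \<circ> sw 0 v) \<phi> \<longrightarrow>
           ple M (((override_on (E(0:=z)) b {1..k})(v:=w)) v) (((override_on (E(0:=z)) b {1..k})(v:=w)) 0)))"
      unfolding \<theta>_def by (simp only: sat.simps sat_exb setk sat_ren[OF inj_sw] sat_Le tval.simps ball_UNIV)
    also have "\<dots> \<longleftrightarrow> sat M UNIV ((\<lambda>_. undefined)(0:=z)) Cf \<and>
     (\<exists>b. sat M UNIV (override_on E b {1..k}) \<Psi> \<and> (\<forall>w\<in>defset M \<phi> b. ple M w z))"
      by (simp only: s1 s2 s3 s4 cfs[of E z] defset_def mem_Collect_eq Ball_def)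
    finally show ?thesis .
  qed
  have mB: "sat M UNIV (E(0:=m)) \<theta>"
    unfolding \<theta>sem using mX mmax Pa Xeq by blast
  have lb: "\<forall>z. sat M UNIV (E(0:=z)) \<theta> \<longrightarrow> pled M True \<alpha> z"
  proof (intro allI impI)
    fix z assume "sat M UNIV (E(0:=z)) \<theta>"
    then obtain b where b: "sat M UNIV (override_on E b {1..k}) \<Psi>" "\<forall>w\<in>defset M \<phi> b. ple M w z"
      unfolding \<theta>sem by blast
    from H[OF b(1)] obtain x where x: "x \<in> defset M \<phi> b" "x \<in> defset M \<phi> a" by blast
    then have "ple M x z" "ple M \<alpha> x" using b(2) Xeq by auto
    then show "pled M True \<alpha> z" unfolding pled_def using trans by simp
  qed
  obtain z0 where z0: "sat M UNIV (E(0:=z0)) (minfm True \<theta>)" using ext_principle[OF pm mB lb] by blast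
  define \<chi> where "\<chi> = Ex 0 (minfm True \<theta>)"
  have sat\<chi>: "sat M UNIV E \<chi>" unfolding \<chi>_def using z0 by auto
  have fv\<theta>: "fv \<theta> \<subseteq> insert 0 (fv \<Psi> - {1..k})"
  proof -
    have "fv (ren (sw 0 v) \<phi>) \<subseteq> insert v {1..k}"
      using fvphi v by (auto simp: fv_ren[OF inj_sw] sw_def)
    then show ?thesis unfolding \<theta>_def using fvCf by (auto simp: fv_exb setk)
  qed
  have fv\<chi>: "fv \<chi> \<subseteq> fv \<Psi> - {1..k}" unfolding \<chi>_def using fv_minfm[of True \<theta>] fv\<theta> by auto
  define E' where "E' = (\<lambda>n. if n \<in> fv \<chi> then E n else pzero M)"
  have rE': "range E' \<subseteq> S" using par fv\<chi> zS unfolding E'_def by auto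
  have "sat M UNIV E' \<chi>" using sat\<chi> by (rule iffD1[OF sat_cong, rotated]) (auto simp: E'_def)
  then have "sat M S E' \<chi>" using esat[OF rE'] by simp
  then obtain s where s: "s \<in> S" "sat M S (E'(0:=s)) (minfm True \<theta>)" unfolding \<chi>_def by auto
  have "range (E'(0:=s)) \<subseteq> S" using rE' s(1) by auto
  then have "sat M UNIV (E'(0:=s)) (minfm True \<theta>)" using s(2) esat by simp
  then have "sat M UNIV (E(0:=s)) (minfm True \<theta>)"
    by (rule iffD1[OF sat_cong, rotated]) (auto simp: E'_def \<chi>_def)
  then have sB: "sat M UNIV (E(0:=s)) \<theta>" and smin: "\<forall>z. sat M UNIV (E(0:=z)) \<theta> \<longrightarrow> ple M s z"
    unfolding sat_minfm pled_def by auto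
  from sB have Cs: "sat M UNIV ((\<lambda>_. undefined)(0:=s)) Cf" unfolding \<theta>sem by blast
  have "ple M \<alpha> s" using lb sB unfolding pled_def by auto
  moreover have "ple M s m" using smin mB by blast
  then have "ple M s \<beta>" using mX Xeq trans by auto
  ultimately have "s \<in> defset M \<phi> a" using Cs Xeq by auto
  then show False using disj s(1) by auto
qed

theorem lemma4p6:
  fixes M :: "'a pstruct" and S :: "'a set" and \<phi> :: fm and k :: nat and a :: "nat \<Rightarrow> 'a"
  assumes "presburger_model M"
    and "saturated M"
    and "elem_sub M S"
    and "small_in S"
    and "fv \<phi> \<subseteq> {0..k}"
    and "(\<exists>p. defset M \<phi> a = {p}) \<or> bounded_1cell M (defset M \<phi> a)"
    and "defset M \<phi> a \<inter> S = {}"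
  shows "\<exists>a'. same_type M S k a a' \<and> defset M \<phi> a \<inter> defset M \<phi> a' = {}"
proof -
  note pm = assms(1) and satM = assms(2) and es = assms(3) and smS = assms(4) and fvphi = assms(5)
  have inf: "infinite (UNIV :: 'a set)" using M_infinite[OF pm] .
  define A where "A = S \<union> a ` {1..k}"
  have smA: "small_in A" unfolding A_def by (rule small_union_finite[OF inf smS]) simp
  obtain \<alpha> \<beta> Cf m where fvCf: "fv Cf \<subseteq> {0}"
    and Xeq: "defset M \<phi> a = {x. ple M \<alpha> x \<and> ple M x \<beta> \<and> sat M UNIV ((\<lambda>_. undefined)(0:=x)) Cf}"
    and mX: "m \<in> defset M \<phi> a" and mmax: "\<forall>x\<in>defset M \<phi> a. ple M x m"
    using shape[OF pm fvphi assms(6)] by blast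
  define \<tau> where "\<tau> = (\<lambda>n::nat. if n = 0 then 0 else n + k)"
  have inj\<tau>: "inj \<tau>" unfolding inj_def \<tau>_def by auto
  define Dfm where "Dfm = Not (Ex 0 (And \<phi> (ren \<tau> \<phi>)))"
  define eD where "eD = (\<lambda>n. a (n - k))"
  have Dsem: "sat M UNIV (override_on eD b {1..k}) Dfm \<longleftrightarrow> defset M \<phi> b \<inter> defset M \<phi> a = {}" for b
  proof -
    have 1: "sat M UNIV ((override_on eD b {1..k})(0:=x)) \<phi> = sat M UNIV (b(0:=x)) \<phi>" for x
      by (rule sat_cong) (use fvphi in \<open>auto simp: override_on_def\<close>)
    have 2: "sat M UNIV ((override_on eD b {1..k})(0:=x) \<circ> \<tau>) \<phi> = sat M UNIV (a(0:=x)) \<phi>" for x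
      by (rule sat_cong) (use fvphi in \<open>auto simp: override_on_def \<tau>_def eD_def\<close>)
    have "sat M UNIV (override_on eD b {1..k}) Dfm \<longleftrightarrow>
       \<not> (\<exists>x. sat M UNIV ((override_on eD b {1..k})(0:=x)) \<phi> \<and> sat M UNIV ((override_on eD b {1..k})(0:=x) \<circ> \<tau>) \<phi>)"
      unfolding Dfm_def by (simp add: sat_ren[OF inj\<tau>])
    also have "\<dots> \<longleftrightarrow> defset M \<phi> b \<inter> defset M \<phi> a = {}"
      unfolding 1 2 defset_def by auto
    finally show ?thesis .
  qed
  have Dpar: "\<forall>n\<in>fv Dfm - {1..k}. eD n \<in> A"
  proof
    fix n assume n: "n \<in> fv Dfm - {1..k}"
    then have "n \<in> (fv \<phi> \<union> \<tau> ` fv \<phi>) - {0}" unfolding Dfm_def by (simp add: fv_ren[OF inj\<tau>])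
    then obtain j where j: "j \<in> fv \<phi>" "n = \<tau> j" "n \<noteq> 0"
      using n fvphi by auto
    then have "j \<noteq> 0" unfolding \<tau>_def by (auto split: if_splits)
    then have "j \<in> {1..k}" "n = j + k" using j fvphi unfolding \<tau>_def by auto
    then show "eD n \<in> A" unfolding eD_def A_def by simp
  qed
  define \<Gamma>t where "\<Gamma>t = {(\<psi>,e). (\<forall>n\<in>fv \<psi> - {1..k}. e n \<in> S) \<and> sat M UNIV (override_on e a {1..k}) \<psi>}"
  define \<Gamma> where "\<Gamma> = insert (Dfm, eD) \<Gamma>t"
  have par\<Gamma>: "\<forall>(\<psi>,e)\<in>\<Gamma>. \<forall>n\<in>fv \<psi> - {1..k}. e n \<in> A" using Dpar unfolding \<Gamma>_def \<Gamma>t_def A_def by auto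
  have finsat: "\<forall>F\<subseteq>\<Gamma>. finite F \<longrightarrow> (\<exists>b. \<forall>(\<psi>,e)\<in>F. sat M UNIV (override_on e b {1..k}) \<psi>)"
  proof (intro allI impI)
    fix F assume F: "F \<subseteq> \<Gamma>" "finite F"
    define Ft where "Ft = F - {(Dfm,eD)}"
    have Ft: "finite Ft" "Ft \<subseteq> \<Gamma>t" using F unfolding Ft_def \<Gamma>_def by auto
    have "Ft \<subseteq> {(\<psi>,e). \<forall>n\<in>fv \<psi> - {1..k}. e n \<in> S}" using Ft(2) unfolding \<Gamma>t_def by auto
    from merge[where M=M, OF Ft(1) this] obtain \<Psi> E where mg: "0 \<notin> fv \<Psi>" "\<forall>n\<in>fv \<Psi> - {1..k}. E n \<in> S"
      "\<forall>b. sat M UNIV (override_on E b {1..k}) \<Psi> = (\<forall>(\<psi>,e)\<in>Ft. sat M UNIV (override_on e b {1..k}) \<psi>)"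
      by blast
    have "\<forall>(\<psi>,e)\<in>Ft. sat M UNIV (override_on e a {1..k}) \<psi>" using Ft(2) unfolding \<Gamma>t_def by auto
    then have Pa: "sat M UNIV (override_on E a {1..k}) \<Psi>" using mg(3) by blast
    obtain b where bb: "sat M UNIV (override_on E b {1..k}) \<Psi>" "defset M \<phi> b \<inter> defset M \<phi> a = {}"
      using core[OF pm es fvphi fvCf Xeq mX mmax assms(7) mg(1) mg(2) Pa] by blast
    have bFt: "\<forall>(\<psi>,e)\<in>Ft. sat M UNIV (override_on e b {1..k}) \<psi>" using mg(3) bb(1) by blast
    show "\<exists>b. \<forall>(\<psi>,e)\<in>F. sat M UNIV (override_on e b {1..k}) \<psi>"
    proof (intro exI ballI)
      fix pe assume pe: "pe \<in> F"
      show "case pe of (\<psi>,e) \<Rightarrow> sat M UNIV (override_on e b {1..k}) \<psi>"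
      proof (cases "pe = (Dfm,eD)")
        case True then show ?thesis using Dsem bb(2) by simp
      next
        case False then have "pe \<in> Ft" using pe unfolding Ft_def by simp
        then show ?thesis using bFt by blast
      qed
    qed
  qed
  from realize[OF satM inf smA par\<Gamma> finsat] obtain b where
    b: "\<forall>(\<psi>,e)\<in>\<Gamma>. sat M UNIV (override_on e b {1..k}) \<psi>" by blast
  show ?thesis
  proof (intro exI conjI)
    show "same_type M S k a b"
      unfolding same_type_def
    proof (intro allI impI)
      fix \<psi> e assume pe: "\<forall>n\<in>fv \<psi> - {1..k}. e n \<in> S"
      show "sat M UNIV (override_on e a {1..k}) \<psi> = sat M UNIV (override_on e b {1..k}) \<psi>"
      proof
        assume "sat M UNIV (override_on e a {1..k}) \<psi>"
        then have "(\<psi>,e) \<in> \<Gamma>" using pe unfolding \<Gamma>_def \<Gamma>t_def by auto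
        then show "sat M UNIV (override_on e b {1..k}) \<psi>" using b by blast
      next
        assume B: "sat M UNIV (override_on e b {1..k}) \<psi>"
        show "sat M UNIV (override_on e a {1..k}) \<psi>"
        proof (rule ccontr)
          assume "\<not> sat M UNIV (override_on e a {1..k}) \<psi>"
          then have "(Not \<psi>,e) \<in> \<Gamma>" using pe unfolding \<Gamma>_def \<Gamma>t_def by auto
          then have "sat M UNIV (override_on e b {1..k}) (Not \<psi>)" using b by blast
          then show False using B by simp
        qed
      qed
    qed
    have "(Dfm,eD) \<in> \<Gamma>" unfolding \<Gamma>_def by simp
    then have "sat M UNIV (override_on eD b {1..k}) Dfm" using b by blast
    then show "defset M \<phi> a \<inter> defset M \<phi> b = {}" using Dsem by blast
  qed
qed

end
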